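(* Every complex $3$-dimensional binary $\mathfrak{perm}$ superalgebra of type $(2,1)$ is a $\mathfrak{perm}$ superalgebra.
   Context: All algebras are over $\mathbb{C}$. A superalgebra is a $\mathbb{Z}_2$-graded algebra $A=A_0\oplus A_1$ with $A_iA_j\subseteq A_{i+j \bmod 2}$; $|x|\in\{0,1\}$ is the degree of a homogeneous $x$. It has type $(n,m)$ if $\dim A_0=n$, $\dim A_1=m$. The associator is $(x,y,z)=(xy)z-x(yz)$. A $\mathfrak{perm}$ superalgebra is a superalgebra satisfying $(x,y,z)=0$ and $x(yz)=(-1)^{|y||z|}x(zy)$ for all homogeneous $x,y,z$. A binary $\mathfrak{perm}$ superalgebra is a superalgebra satisfying, for all homogeneous $x,y,z$: $(x,y,z)=-(-1)^{|y||z|}(x,z,y)=-(-1)^{|x||y|}(y,x,z)$ and $(xy)z+(-1)^{|x||y|+|x||z|+|y||z|}(zy)x=(-1)^{|y||z|}(xz)y+(-1)^{|x||z|+|y||z|}(zx)y$. *)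

theory Defs
  imports Complex_Main
begin

definition grade :: "'a set \<Rightarrow> 'a set \<Rightarrow> nat \<Rightarrow> 'a set" where
  "grade A0 A1 d = (if d = 0 then A0 else A1)"

definition bilinear_prod ::
  "(complex \<Rightarrow> 'a::ab_group_add \<Rightarrow> 'a) \<Rightarrow> ('a \<Rightarrow> 'a \<Rightarrow> 'a) \<Rightarrow> bool" where
  "bilinear_prod sc m \<longleftrightarrow>
     (\<forall>x y z. m (x + y) z = m x z + m y z) \<and>
     (\<forall>x y z. m x (y + z) = m x y + m x z) \<and>
     (\<forall>c x y. m (sc c x) y = sc c (m x y)) \<and>
     (\<forall>c x y. m x (sc c y) = sc c (m x y))"

definition superalgebra_of_type ::
  "(complex \<Rightarrow> 'a::ab_group_add \<Rightarrow> 'a) \<Rightarrow> ('a \<Rightarrow> 'a \<Rightarrow> 'a) \<Rightarrow> 'a set \<Rightarrow> 'a set \<Rightarrow> nat \<Rightarrow> nat \<Rightarrow> bool" where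
  "superalgebra_of_type sc m A0 A1 n k \<longleftrightarrow>
     vector_space sc \<and> bilinear_prod sc m \<and>
     module.subspace sc A0 \<and> module.subspace sc A1 \<and>
     A0 \<inter> A1 = {0} \<and> (\<forall>x. \<exists>a\<in>A0. \<exists>b\<in>A1. x = a + b) \<and>
     vector_space.dim sc A0 = n \<and> vector_space.dim sc A1 = k \<and>
     (\<forall>i<2. \<forall>j<2. \<forall>x\<in>grade A0 A1 i. \<forall>y\<in>grade A0 A1 j. m x y \<in> grade A0 A1 ((i + j) mod 2))"

definition assoc :: "('a::ab_group_add \<Rightarrow> 'a \<Rightarrow> 'a) \<Rightarrow> 'a \<Rightarrow> 'a \<Rightarrow> 'a \<Rightarrow> 'a" where
  "assoc m x y z = m (m x y) z - m x (m y z)"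

definition sgn_act :: "(complex \<Rightarrow> 'a \<Rightarrow> 'a) \<Rightarrow> nat \<Rightarrow> 'a \<Rightarrow> 'a" where
  "sgn_act sc k v = sc ((-1) ^ k) v"

definition perm_super ::
  "(complex \<Rightarrow> 'a::ab_group_add \<Rightarrow> 'a) \<Rightarrow> ('a \<Rightarrow> 'a \<Rightarrow> 'a) \<Rightarrow> 'a set \<Rightarrow> 'a set \<Rightarrow> bool" where
  "perm_super sc m A0 A1 \<longleftrightarrow>
    (\<forall>dx<2. \<forall>dy<2. \<forall>dz<2. \<forall>x\<in>grade A0 A1 dx. \<forall>y\<in>grade A0 A1 dy. \<forall>z\<in>grade A0 A1 dz.
       assoc m x y z = 0 \<and>
       m x (m y z) = sgn_act sc (dy * dz) (m x (m z y)))"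

definition binary_perm_super ::
  "(complex \<Rightarrow> 'a::ab_group_add \<Rightarrow> 'a) \<Rightarrow> ('a \<Rightarrow> 'a \<Rightarrow> 'a) \<Rightarrow> 'a set \<Rightarrow> 'a set \<Rightarrow> bool" where
  "binary_perm_super sc m A0 A1 \<longleftrightarrow>
    (\<forall>dx<2. \<forall>dy<2. \<forall>dz<2. \<forall>x\<in>grade A0 A1 dx. \<forall>y\<in>grade A0 A1 dy. \<forall>z\<in>grade A0 A1 dz.
       assoc m x y z = - sgn_act sc (dy * dz) (assoc m x z y) \<and>
       assoc m x y z = - sgn_act sc (dx * dy) (assoc m y x z) \<and>
       m (m x y) z + sgn_act sc (dx * dy + dx * dz + dy * dz) (m (m z y) x)
         = sgn_act sc (dy * dz) (m (m x z) y) + sgn_act sc (dx * dz + dy * dz) (m (m z x) y))"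

end

theory Submission
  imports Defs
begin


locale bp = vector_space sc for sc :: "complex \<Rightarrow> 'a::ab_group_add \<Rightarrow> 'a" +
  fixes m :: "'a \<Rightarrow> 'a \<Rightarrow> 'a" and A0 A1 :: "'a set" and e1 e2 f :: 'a
  assumes bil: "bilinear_prod sc m"
  and closed: "\<forall>i<2. \<forall>j<2. \<forall>x\<in>grade A0 A1 i. \<forall>y\<in>grade A0 A1 j. m x y \<in> grade A0 A1 ((i + j) mod 2)"
  and bps: "binary_perm_super sc m A0 A1"
  and A0sp: "\<And>x. x \<in> A0 \<Longrightarrow> \<exists>a b. x = sc a e1 + sc b e2"
  and A1sp: "\<And>x. x \<in> A1 \<Longrightarrow> \<exists>c. x = sc c f"
  and e1: "e1 \<in> A0" and e2: "e2 \<in> A0" and f: "f \<in> A1" and fnz: "f \<noteq> 0"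
begin

lemma madd1: "m (x + y) z = m x z + m y z" using bil unfolding bilinear_prod_def by blast
lemma madd2: "m x (y + z) = m x y + m x z" using bil unfolding bilinear_prod_def by blast
lemma msc1: "m (sc c x) y = sc c (m x y)" using bil unfolding bilinear_prod_def by blast
lemma msc2: "m x (sc c y) = sc c (m x y)" using bil unfolding bilinear_prod_def by blast
lemma m01: "m 0 y = 0" using msc1[of 0 0 y] by simp
lemma m02: "m y 0 = 0" using msc2[of y 0 0] by simp

lemma c00: "x \<in> A0 \<Longrightarrow> y \<in> A0 \<Longrightarrow> m x y \<in> A0"
  using closed unfolding grade_def by (metis less_2_cases_iff add_0 mod_0)
lemma c01: "x \<in> A0 \<Longrightarrow> y \<in> A1 \<Longrightarrow> m x y \<in> A1"
proof -
  assume "x \<in> A0" "y \<in> A1"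
  then show ?thesis using closed[rule_format, of 0 1 x y] unfolding grade_def by simp
qed
lemma c10: "x \<in> A1 \<Longrightarrow> y \<in> A0 \<Longrightarrow> m x y \<in> A1"
proof -
  assume "x \<in> A1" "y \<in> A0"
  then show ?thesis using closed[rule_format, of 1 0 x y] unfolding grade_def by simp
qed
lemma c11: "x \<in> A1 \<Longrightarrow> y \<in> A1 \<Longrightarrow> m x y \<in> A0"
proof -
  assume "x \<in> A1" "y \<in> A1"
  then show ?thesis using closed[rule_format, of 1 1 x y] unfolding grade_def by simp
qed

lemma B:
  assumes "dx < 2" "dy < 2" "dz < 2" "x \<in> grade A0 A1 dx" "y \<in> grade A0 A1 dy" "z \<in> grade A0 A1 dz"
  shows "assoc m x y z = - sgn_act sc (dy * dz) (assoc m x z y)"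
    "assoc m x y z = - sgn_act sc (dx * dy) (assoc m y x z)"
    "m (m x y) z + sgn_act sc (dx * dy + dx * dz + dy * dz) (m (m z y) x)
         = sgn_act sc (dy * dz) (m (m x z) y) + sgn_act sc (dx * dz + dy * dz) (m (m z x) y)"
  using bps assms unfolding binary_perm_super_def by blast+

lemma sg: "sgn_act sc k v = (if even k then v else - v)"
  unfolding sgn_act_def by simp

lemma B000: assumes "x \<in> A0" "y \<in> A0" "z \<in> A0"
  shows "assoc m x y z = - assoc m x z y" "assoc m x y z = - assoc m y x z"
    "m (m x y) z + m (m z y) x = m (m x z) y + m (m z x) y"
  using B[of 0 0 0 x y z] assms by (simp_all add: grade_def sg)


lemma half: "(v::'a) = - v \<Longrightarrow> v = 0"
proof -
  assume "v = - v"
  then have "v + v = 0" by (metis add.right_inverse)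
  moreover have "sc 2 v = v + v" using scale_left_distrib[of 1 1 v] by simp
  ultimately show "v = 0" by simp
qed

lemma tri0:
  fixes T :: "'a \<Rightarrow> 'a \<Rightarrow> 'a \<Rightarrow> 'a"
  assumes a1: "\<And>x y z w. T (x+w) y z = T x y z + T w y z"
    and a2: "\<And>x y z w. T x (y+w) z = T x y z + T x w z"
    and a3: "\<And>x y z w. T x y (z+w) = T x y z + T x y w"
    and s1: "\<And>c x y z. T (sc c x) y z = sc c (T x y z)"
    and s2: "\<And>c x y z. T x (sc c y) z = sc c (T x y z)"
    and s3: "\<And>c x y z. T x y (sc c z) = sc c (T x y z)"
    and b: "\<And>u v w. u \<in> {e1,e2} \<Longrightarrow> v \<in> {e1,e2} \<Longrightarrow> w \<in> {e1,e2} \<Longrightarrow> T u v w = 0"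
    and x: "x \<in> A0" and y: "y \<in> A0" and z: "z \<in> A0"
  shows "T x y z = 0"
proof -
  obtain a1 b1 where x': "x = sc a1 e1 + sc b1 e2" using A0sp[OF x] by blast
  obtain a2 b2 where y': "y = sc a2 e1 + sc b2 e2" using A0sp[OF y] by blast
  obtain a3 b3 where z': "z = sc a3 e1 + sc b3 e2" using A0sp[OF z] by blast
  show ?thesis unfolding x' y' z' by (simp add: a1 a2 a3 s1 s2 s3 b)
qed

lemma tri0':
  fixes T :: "'a \<Rightarrow> 'a \<Rightarrow> 'a \<Rightarrow> 'a"
  assumes a1: "\<And>x y z w. T (x+w) y z = T x y z + T w y z"
    and a2: "\<And>x y z w. T x (y+w) z = T x y z + T x w z"
    and a3: "\<And>x y z w. T x y (z+w) = T x y z + T x y w"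
    and s1: "\<And>c x y z. T (sc c x) y z = sc c (T x y z)"
    and s2: "\<And>c x y z. T x (sc c y) z = sc c (T x y z)"
    and s3: "\<And>c x y z. T x y (sc c z) = sc c (T x y z)"
    and r1: "\<And>u w. u \<in> A0 \<Longrightarrow> w \<in> A0 \<Longrightarrow> T u u w = 0"
    and r2: "\<And>u w. u \<in> A0 \<Longrightarrow> w \<in> A0 \<Longrightarrow> T u w u = 0"
    and r3: "\<And>u w. u \<in> A0 \<Longrightarrow> w \<in> A0 \<Longrightarrow> T w u u = 0"
    and x: "x \<in> A0" and y: "y \<in> A0" and z: "z \<in> A0"
  shows "T x y z = 0"
proof (rule tri0[OF a1 a2 a3 s1 s2 s3 _ x y z])
  fix u v w assume "u \<in> {e1,e2}" "v \<in> {e1,e2}" "w \<in> {e1,e2}"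
  then show "T u v w = 0" using r1 r2 r3 e1 e2 by auto
qed

lemma assoc_lin:
  "assoc m (x+w) y z = assoc m x y z + assoc m w y z"
  "assoc m x (y+w) z = assoc m x y z + assoc m x w z"
  "assoc m x y (z+w) = assoc m x y z + assoc m x y w"
  "assoc m (sc c x) y z = sc c (assoc m x y z)"
  "assoc m x (sc c y) z = sc c (assoc m x y z)"
  "assoc m x y (sc c z) = sc c (assoc m x y z)"
  unfolding assoc_def by (simp_all add: madd1 madd2 msc1 msc2 algebra_simps)

definition P where "P x y z = m x (m y z) - m x (m z y)"
definition Q where "Q x y z = m x (m y z) + m x (m z y)"

lemma P_lin:
  "P (x+w) y z = P x y z + P w y z"
  "P x (y+w) z = P x y z + P x w z"
  "P x y (z+w) = P x y z + P x y w"
  "P (sc c x) y z = sc c (P x y z)"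
  "P x (sc c y) z = sc c (P x y z)"
  "P x y (sc c z) = sc c (P x y z)"
  unfolding P_def by (simp_all add: madd1 madd2 msc1 msc2 algebra_simps)

lemma Q_lin:
  "Q (sc c x) y z = sc c (Q x y z)"
  "Q x (sc c y) z = sc c (Q x y z)"
  "Q x y (sc c z) = sc c (Q x y z)"
  unfolding Q_def by (simp_all add: madd1 madd2 msc1 msc2 algebra_simps)

lemma even_assoc: "x \<in> A0 \<Longrightarrow> y \<in> A0 \<Longrightarrow> z \<in> A0 \<Longrightarrow> assoc m x y z = 0"
proof (rule tri0'[OF assoc_lin])
  fix u w assume u: "u \<in> A0" and w: "w \<in> A0"
  show "assoc m u u w = 0" using B000(2)[OF u u w] by (rule half)
  show "assoc m w u u = 0" using B000(1)[OF w u u] by (rule half)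
  have "assoc m u w u = - assoc m u u w" using B000(1)[OF u w u] .
  then show "assoc m u w u = 0" using half B000(2)[OF u u w] by simp
qed

lemma even_perm: "x \<in> A0 \<Longrightarrow> y \<in> A0 \<Longrightarrow> z \<in> A0 \<Longrightarrow> P x y z = 0"
proof -
  have cyc: "P x y z = P z x y" if x: "x \<in> A0" and y: "y \<in> A0" and z: "z \<in> A0" for x y z
  proof -
    have "m x (m y z) = m (m x y) z" "m x (m z y) = m (m x z) y" "m z (m x y) = m (m z x) y"
      "m z (m y x) = m (m z y) x"
      using even_assoc[of x y z] even_assoc[of x z y] even_assoc[of z x y] even_assoc[of z y x] x y z
      unfolding assoc_def by auto
    then show ?thesis unfolding P_def using B000(3)[OF x y z]
      by (simp add: algebra_simps)
  qed
  show "x \<in> A0 \<Longrightarrow> y \<in> A0 \<Longrightarrow> z \<in> A0 \<Longrightarrow> P x y z = 0"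
  proof (rule tri0'[OF P_lin])
    fix u w assume u: "u \<in> A0" and w: "w \<in> A0"
    show "P w u u = 0" unfolding P_def by simp
    then show "P u u w = 0" using cyc[OF u u w] cyc[OF w u u] by simp
    then show "P u w u = 0" using cyc[OF u w u] by simp
  qed
qed

definition L where "L a = (SOME c. m a f = sc c f)"
definition R where "R a = (SOME c. m f a = sc c f)"

lemma Lf: "a \<in> A0 \<Longrightarrow> m a f = sc (L a) f"
  unfolding L_def by (rule someI_ex) (rule A1sp[OF c01[OF _ f]])
lemma Rf: "a \<in> A0 \<Longrightarrow> m f a = sc (R a) f"
  unfolding R_def by (rule someI_ex) (rule A1sp[OF c10[OF f]])

lemma u0: "m f f \<in> A0" using c11[OF f f] .

lemma B001: assumes "x \<in> A0" "y \<in> A0" "z \<in> A1"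
  shows "assoc m x y z = - assoc m x z y" "assoc m x y z = - assoc m y x z"
    "m (m x y) z + m (m z y) x = m (m x z) y + m (m z x) y"
  using B[of 0 0 1 x y z] assms by (simp_all add: grade_def sg)
lemma B010: assumes "x \<in> A0" "y \<in> A1" "z \<in> A0"
  shows "assoc m x y z = - assoc m x z y" "assoc m x y z = - assoc m y x z"
    "m (m x y) z + m (m z y) x = m (m x z) y + m (m z x) y"
  using B[of 0 1 0 x y z] assms by (simp_all add: grade_def sg)
lemma B100: assumes "x \<in> A1" "y \<in> A0" "z \<in> A0"
  shows "assoc m x y z = - assoc m x z y" "assoc m x y z = - assoc m y x z"
    "m (m x y) z + m (m z y) x = m (m x z) y + m (m z x) y"
  using B[of 1 0 0 x y z] assms by (simp_all add: grade_def sg)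
lemma B011: assumes "x \<in> A0" "y \<in> A1" "z \<in> A1"
  shows "m (m x y) z - m (m z y) x = - m (m x z) y - m (m z x) y"
  using B[of 0 1 1 x y z] assms by (simp add: grade_def sg)
lemma B101: assumes "x \<in> A1" "y \<in> A0" "z \<in> A1"
  shows "assoc m x y z = - assoc m x z y" "assoc m x y z = - assoc m y x z"
  using B[of 1 0 1 x y z] assms by (simp_all add: grade_def sg)

lemma asc0: "a \<in> A0 \<Longrightarrow> b \<in> A0 \<Longrightarrow> assoc m a f b = 0"
  unfolding assoc_def by (simp add: Lf Rf msc1 msc2 mult.commute)

lemma asc1: "a \<in> A0 \<Longrightarrow> b \<in> A0 \<Longrightarrow> assoc m a b f = 0"
  using B001(1)[OF _ _ f, of a b] asc0 by simp
lemma asc2: "a \<in> A0 \<Longrightarrow> b \<in> A0 \<Longrightarrow> assoc m f a b = 0"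
  using B010(2)[OF _ f, of a b] asc0 by simp

lemma LL: assumes a: "a \<in> A0" and b: "b \<in> A0" shows "L a * L b = L a * R b"
proof -
  have e: "m (m a b) f = m a (m b f)" using asc1[OF a b] unfolding assoc_def by simp
  have "m (m a b) f + m (m f b) a = m (m a f) b + m (m f a) b" using B001(3)[OF a b f] .
  then have "sc (L b * L a) f + sc (R b * R a) f = sc (L a * R b) f + sc (R a * R b) f"
    unfolding e by (simp add: Lf Rf a b msc1 msc2)
  then have "sc (L b * L a + R b * R a) f = sc (L a * R b + R a * R b) f"
    by (simp add: scale_left_distrib)
  then have "L b * L a + R b * R a = L a * R b + R a * R b" using fnz by simp
  then show ?thesis by (simp add: algebra_simps)
qed

lemma twoF: assumes a: "a \<in> A0"
  shows "sc (L a) (m f f) = 0 \<and> sc (R a) (m f f) = 0 \<and> m a (m f f) = 0 \<and> m (m f f) a = 0"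
proof -
  define u where "u = m f f"
  define X where "X = sc (L a) u"
  define Y where "Y = sc (R a) u"
  have h1: "assoc m a f f = X - m a u" unfolding assoc_def X_def u_def by (simp add: Lf a msc1)
  have h2: "assoc m f a f = Y - X" unfolding assoc_def X_def Y_def u_def by (simp add: Lf Rf a msc1 msc2)
  have h3: "assoc m f f a = m u a - Y" unfolding assoc_def Y_def u_def by (simp add: Rf a msc2)
  have i1: "Y - X = - (X - m a u)" using B101(2)[OF f a f] h1 h2 by simp
  have i2: "Y - X = - (m u a - Y)" using B101(1)[OF f a f] h2 h3 by simp
  have i3: "X - m u a = - X - Y" using B011[OF a f f] unfolding X_def Y_def u_def
    by (simp add: Lf Rf a msc1)
  have au: "m a u = Y" using i1 by (simp add: algebra_simps)
  have ua: "m u a = X" using i2 by (simp add: algebra_simps)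
  have XY: "Y = - X" using i3 ua by (simp add: algebra_simps eq_neg_iff_add_eq_0 add.commute)
  have "L a * L a = L a * R a" using LL[OF a a] .
  then have "L a = 0 \<or> L a = R a" by (metis mult_left_cancel)
  then have X0: "X = 0"
  proof
    assume "L a = 0" then show "X = 0" unfolding X_def by simp
  next
    assume "L a = R a" then have "X = Y" unfolding X_def Y_def by simp
    then show "X = 0" using XY half by simp
  qed
  show ?thesis using X0 XY au ua unfolding X_def Y_def u_def by simp
qed

lemma threeF: "m (m f f) f = 0 \<and> m f (m f f) = 0"
proof (cases "m f f = 0")
  case True then show ?thesis by (simp add: m01 m02)
next
  case False
  have "sc (L (m f f)) (m f f) = 0" "sc (R (m f f)) (m f f) = 0" using twoF[OF u0] by auto
  then have "L (m f f) = 0" "R (m f f) = 0" using False by auto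
  then show ?thesis using Lf[OF u0] Rf[OF u0] by simp
qed

lemma pat001: "a \<in> A0 \<Longrightarrow> b \<in> A0 \<Longrightarrow> assoc m a b f = 0 \<and> P a b f = 0"
  using asc1 LL[of a b] unfolding P_def by (simp add: Lf Rf msc2 mult.commute)
lemma pat010: "a \<in> A0 \<Longrightarrow> b \<in> A0 \<Longrightarrow> assoc m a f b = 0 \<and> P a f b = 0"
  using asc0 LL[of a b] unfolding P_def by (simp add: Lf Rf msc2 mult.commute) metis
lemma pat100: "a \<in> A0 \<Longrightarrow> b \<in> A0 \<Longrightarrow> assoc m f a b = 0 \<and> P f a b = 0"
proof -
  assume a: "a \<in> A0" and b: "b \<in> A0"
  have "m f (m a b) = m (m f a) b" "m f (m b a) = m (m f b) a"
    using asc2[OF a b] asc2[OF b a] unfolding assoc_def by simp_all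
  then show ?thesis using asc2[OF a b] unfolding P_def by (simp add: a b Rf msc1 mult.commute)
qed
lemma pat011: "a \<in> A0 \<Longrightarrow> assoc m a f f = 0 \<and> Q a f f = 0"
  using twoF unfolding Q_def assoc_def by (simp add: Lf msc1)
lemma pat101: assumes a: "a \<in> A0" shows "assoc m f a f = 0 \<and> P f a f = 0"
proof -
  have t: "sc (L a) (m f f) = 0" "sc (R a) (m f f) = 0" using twoF[OF a] by blast+
  show ?thesis unfolding P_def assoc_def Lf[OF a] Rf[OF a] msc1 msc2 t by simp
qed
lemma pat110: assumes a: "a \<in> A0" shows "assoc m f f a = 0 \<and> P f f a = 0"
proof -
  have t: "sc (L a) (m f f) = 0" "sc (R a) (m f f) = 0" "m (m f f) a = 0" using twoF[OF a] by blast+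
  show ?thesis unfolding P_def assoc_def Lf[OF a] Rf[OF a] msc1 msc2 t by simp
qed
lemma pat111: "assoc m f f f = 0 \<and> Q f f f = 0"
  using threeF unfolding Q_def assoc_def by simp

lemma perm_eq: "(m x (m y z) = sgn_act sc k (m x (m z y))) = (if even k then P x y z = 0 else Q x y z = 0)"
  unfolding P_def Q_def sg by (simp add: eq_neg_iff_add_eq_0)

lemma main: "perm_super sc m A0 A1"
  unfolding perm_super_def
proof (intro allI impI ballI)
  fix dx dy dz x y z
  assume d: "dx < (2::nat)" "dy < (2::nat)" "dz < (2::nat)"
    and x: "x \<in> grade A0 A1 dx" and y: "y \<in> grade A0 A1 dy" and z: "z \<in> grade A0 A1 dz"
  have dx: "dx = 0 \<or> dx = 1" and dy: "dy = 0 \<or> dy = 1" and dz: "dz = 0 \<or> dz = 1" using d by auto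
  show "assoc m x y z = 0 \<and> m x (m y z) = sgn_act sc (dy * dz) (m x (m z y))"
    using dx dy dz
  proof (elim disjE)
    assume "dx = 0" "dy = 0" "dz = 0"
    then show ?thesis using x y z even_assoc[of x y z] even_perm[of x y z] by (simp add: grade_def perm_eq)
  next
    assume "dx = 0" "dy = 0" "dz = 1"
    then have "x \<in> A0" "y \<in> A0" "z \<in> A1" using x y z by (simp_all add: grade_def)
    then obtain c where "z = sc c f" using A1sp by blast
    then show ?thesis using pat001 \<open>x \<in> A0\<close> \<open>y \<in> A0\<close> \<open>dy = 0\<close> by (simp add: assoc_lin P_lin perm_eq)
  next
    assume "dx = 0" "dy = 1" "dz = 0"
    then have "x \<in> A0" "y \<in> A1" "z \<in> A0" using x y z by (simp_all add: grade_def)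
    then obtain c where "y = sc c f" using A1sp by blast
    then show ?thesis using pat010 \<open>x \<in> A0\<close> \<open>z \<in> A0\<close> \<open>dz = 0\<close> by (simp add: assoc_lin P_lin perm_eq)
  next
    assume "dx = 1" "dy = 0" "dz = 0"
    then have "x \<in> A1" "y \<in> A0" "z \<in> A0" using x y z by (simp_all add: grade_def)
    then obtain c where "x = sc c f" using A1sp by blast
    then show ?thesis using pat100 \<open>y \<in> A0\<close> \<open>z \<in> A0\<close> \<open>dz = 0\<close> by (simp add: assoc_lin P_lin perm_eq)
  next
    assume "dx = 0" "dy = 1" "dz = 1"
    then have "x \<in> A0" "y \<in> A1" "z \<in> A1" using x y z by (simp_all add: grade_def)
    then obtain c c' where "y = sc c f" "z = sc c' f" using A1sp by blast
    then show ?thesis using pat011 \<open>x \<in> A0\<close> \<open>dz = 1\<close> \<open>dy = 1\<close> by (simp add: assoc_lin Q_lin perm_eq)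
  next
    assume "dx = 1" "dy = 0" "dz = 1"
    then have "x \<in> A1" "y \<in> A0" "z \<in> A1" using x y z by (simp_all add: grade_def)
    then obtain c c' where "x = sc c f" "z = sc c' f" using A1sp by blast
    then show ?thesis using pat101 \<open>y \<in> A0\<close> \<open>dy = 0\<close> by (simp add: assoc_lin P_lin perm_eq)
  next
    assume "dx = 1" "dy = 1" "dz = 0"
    then have "x \<in> A1" "y \<in> A1" "z \<in> A0" using x y z by (simp_all add: grade_def)
    then obtain c c' where "x = sc c f" "y = sc c' f" using A1sp by blast
    then show ?thesis using pat110 \<open>z \<in> A0\<close> \<open>dz = 0\<close> by (simp add: assoc_lin P_lin perm_eq)
  next
    assume "dx = 1" "dy = 1" "dz = 1"
    then have "x \<in> A1" "y \<in> A1" "z \<in> A1" using x y z by (simp_all add: grade_def)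
    then obtain c c' c'' where "x = sc c f" "y = sc c' f" "z = sc c'' f" using A1sp by blast
    then show ?thesis using pat111 \<open>dz = 1\<close> \<open>dy = 1\<close> by (simp add: assoc_lin Q_lin perm_eq)
  qed
qed

end

theorem mainTheorem17:
  fixes sc :: "complex \<Rightarrow> 'a::ab_group_add \<Rightarrow> 'a"
    and m :: "'a \<Rightarrow> 'a \<Rightarrow> 'a"
    and A0 A1 :: "'a set"
  assumes "superalgebra_of_type sc m A0 A1 2 1"
    and "binary_perm_super sc m A0 A1"
  shows "perm_super sc m A0 A1"
proof -
  have S: "vector_space sc" "bilinear_prod sc m"
     "vector_space.dim sc A0 = 2" "vector_space.dim sc A1 = 1"
     "\<forall>i<2. \<forall>j<2. \<forall>x\<in>grade A0 A1 i. \<forall>y\<in>grade A0 A1 j. m x y \<in> grade A0 A1 ((i + j) mod 2)"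
    using assms(1) unfolding superalgebra_of_type_def by blast+
  interpret vector_space sc by (rule S(1))
  obtain B where B: "B \<subseteq> A0" "independent B" "A0 \<subseteq> span B" "card B = dim A0"
    by (rule basis_exists)
  then have "card B = 2" using S(3) by simp
  then have "\<exists>x y. B = {x, y} \<and> x \<noteq> y" by (rule card_2_iff[THEN iffD1])
  then obtain e1 e2 where E: "B = {e1, e2}" by blast
  obtain C where C: "C \<subseteq> A1" "independent C" "A1 \<subseteq> span C" "card C = dim A1"
    by (rule basis_exists)
  then have "card C = Suc 0" using S(4) by simp
  then have "\<exists>x. C = {x}" by (rule card_1_singleton_iff[THEN iffD1])
  then obtain f where F: "C = {f}" by blast
  have fnz: "f \<noteq> 0" using C(2) F by simp
  have A0sp: "\<exists>a b. x = sc a e1 + sc b e2" if "x \<in> A0" for x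
  proof -
    have "x \<in> span (insert e1 {e2})" using that B(3) E by auto
    then obtain k where "x - sc k e1 \<in> span {e2}" unfolding span_insert by blast
    then obtain l where "x - sc k e1 = sc l e2" unfolding span_singleton by blast
    then have "x = sc k e1 + sc l e2" by (metis diff_add_cancel add.commute)
    then show ?thesis by blast
  qed
  have A1sp: "\<exists>c. x = sc c f" if "x \<in> A1" for x
  proof -
    have "x \<in> span {f}" using that C(3) F by auto
    then show ?thesis unfolding span_singleton by blast
  qed
  interpret bp sc m A0 A1 e1 e2 f
  proof
    show "bilinear_prod sc m" by (rule S(2))
    show "\<forall>i<2. \<forall>j<2. \<forall>x\<in>grade A0 A1 i. \<forall>y\<in>grade A0 A1 j. m x y \<in> grade A0 A1 ((i + j) mod 2)"
      by (rule S(5))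
    show "binary_perm_super sc m A0 A1" by (rule assms(2))
    show "\<And>x. x \<in> A0 \<Longrightarrow> \<exists>a b. x = sc a e1 + sc b e2" by (rule A0sp)
    show "\<And>x. x \<in> A1 \<Longrightarrow> \<exists>c. x = sc c f" by (rule A1sp)
    show "e1 \<in> A0" using B(1) E by blast
    show "e2 \<in> A0" using B(1) E by blast
    show "f \<in> A1" using C(1) F by blast
    show "f \<noteq> 0" by (rule fnz)
  qed
  show ?thesis by (rule main)
qed

end
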